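(* Let $Z=Z_\Sigma$ be a toric variety with a non-degenerate simplicial fan $\Sigma$ in $N=\mathbb{Z}^r$, with notation as in the context. Then \[ [\operatorname{Cl}(Z):\operatorname{Pic}(Z)] \;=\; \frac{1}{|\hat K|}\prod_{\sigma\in\Sigma_{\max}}|K_\sigma|. \]
   Context: Non-degenerate means the primitive ray generators $v_1,\dots,v_n$ of $\Sigma$ generate $\mathbb{Q}^r$ as a convex cone (completeness is not required). Let $F=\mathbb{Z}^n$, $P\colon F\to N$, $e_i\mapsto v_i$, $M=N^*$, $E=F^*$, $K=E/P^*(M)\cong\operatorname{Cl}(Z)$. For $\sigma=\operatorname{cone}(v_{i_1},\dots,v_{i_{n_\sigma}})\in\Sigma_{\max}$ let $N_\sigma=\operatorname{lin}_{\mathbb{Q}}(\sigma)\cap N$, $F_\sigma=\mathbb{Z}^{n_\sigma}$, $P_\sigma\colon F_\sigma\to N_\sigma$, $e_j\mapsto v_{i_j}$, $\beta_\sigma\colon F_\sigma\to F$, $e_j\mapsto e_{i_j}$, $K_\sigma=F_\sigma^*/P_\sigma^*(N_\sigma^* )\cong\operatorname{Cl}(U_\sigma)$ (class group of the affine chart), and $\pi_\sigma\colon K\to K_\sigma$ the map induced by $\beta_\sigma^*$ (restriction of classes). Let $\pi\colon K\to\bigoplus_{\sigma\in\Sigma_{\max}}K_\sigma$, $w\mapsto(\pi_\sigma(w))_\sigma$, and $\hat K=\big(\bigoplus_\sigma K_\sigma\big)/\pi(K)$. *)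

theory Defs
  imports Complex_Main "HOL-Library.Set_Algebras" "HOL-Library.Function_Algebras"
begin

text \<open>N = Z^r is modelled by integer vectors nat \<Rightarrow> int (coordinates k < r,
  zero beyond r); the ray generators are v 0, ..., v (n-1).  A simplicial fan is given by the
  set of index sets S \<subseteq> {..<n} such that cone(v_i : i \<in> S) is a cone of the fan.
  Quotients A/B of additive groups are modelled literally as sets of cosets {a} + B,
  with the pointwise (Minkowski) sum of sets as group operation.\<close>

type_synonym vec = "nat \<Rightarrow> int"

definition cosets :: "'a::plus set \<Rightarrow> 'a set \<Rightarrow> 'a set set" where
  "cosets G H = (\<lambda>g. {g} + H) ` G"

definition dotp :: "nat \<Rightarrow> vec \<Rightarrow> vec \<Rightarrow> int" where
  "dotp r m x = (\<Sum>k<r. m k * x k)"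

definition rcone :: "nat \<Rightarrow> (nat \<Rightarrow> vec) \<Rightarrow> nat set \<Rightarrow> (nat \<Rightarrow> rat) set" where
  "rcone r v S = {x. (\<forall>k\<ge>r. x k = 0) \<and>
     (\<exists>c::nat \<Rightarrow> rat. (\<forall>i\<in>S. 0 \<le> c i) \<and> (\<forall>k<r. x k = (\<Sum>i\<in>S. c i * of_int (v i k))))}"

definition lin_indep_Q :: "nat \<Rightarrow> (nat \<Rightarrow> vec) \<Rightarrow> nat set \<Rightarrow> bool" where
  "lin_indep_Q r v S \<longleftrightarrow> (\<forall>c::nat \<Rightarrow> rat.
     (\<forall>k<r. (\<Sum>i\<in>S. c i * of_int (v i k)) = 0) \<longrightarrow> (\<forall>i\<in>S. c i = 0))"

definition primitive_vec :: "nat \<Rightarrow> vec \<Rightarrow> bool" where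
  "primitive_vec r w \<longleftrightarrow> (\<exists>k<r. w k \<noteq> 0) \<and> (\<forall>d::int. (\<forall>k<r. d dvd w k) \<longrightarrow> d dvd 1)"

definition simplicial_fan :: "nat \<Rightarrow> nat \<Rightarrow> (nat \<Rightarrow> vec) \<Rightarrow> nat set set \<Rightarrow> bool" where
  "simplicial_fan n r v Sig \<longleftrightarrow>
     (\<forall>i<n. \<forall>k\<ge>r. v i k = 0) \<and>
     (\<forall>i<n. primitive_vec r (v i)) \<and>
     Sig \<subseteq> Pow {..<n} \<and>
     (\<forall>i<n. {i} \<in> Sig) \<and>
     (\<forall>S\<in>Sig. \<forall>T. T \<subseteq> S \<longrightarrow> T \<in> Sig) \<and>
     (\<forall>S\<in>Sig. lin_indep_Q r v S) \<and>
     (\<forall>S\<in>Sig. \<forall>T\<in>Sig. rcone r v S \<inter> rcone r v T = rcone r v (S \<inter> T))"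

definition nondegenerate :: "nat \<Rightarrow> nat \<Rightarrow> (nat \<Rightarrow> vec) \<Rightarrow> bool" where
  "nondegenerate n r v \<longleftrightarrow> (\<forall>x::nat \<Rightarrow> rat. \<exists>c::nat \<Rightarrow> rat.
     (\<forall>i<n. 0 \<le> c i) \<and> (\<forall>k<r. x k = (\<Sum>i<n. c i * of_int (v i k))))"

definition max_cones :: "nat set set \<Rightarrow> nat set set" where
  "max_cones Sig = {S\<in>Sig. \<forall>T\<in>Sig. S \<subseteq> T \<longrightarrow> T = S}"

text \<open>E = F^* = Z^n (torus-invariant Weil divisors) and P^*(M).\<close>
definition Elat :: "nat \<Rightarrow> vec set" where
  "Elat n = {a. \<forall>i\<ge>n. a i = 0}"

definition PstarM :: "nat \<Rightarrow> nat \<Rightarrow> (nat \<Rightarrow> vec) \<Rightarrow> vec set" where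
  "PstarM n r v = {(\<lambda>i. if i < n then dotp r m (v i) else 0) | m. True}"

definition ClZ :: "nat \<Rightarrow> nat \<Rightarrow> (nat \<Rightarrow> vec) \<Rightarrow> vec set set" where
  "ClZ n r v = cosets (Elat n) (PstarM n r v)"

definition CDiv :: "nat \<Rightarrow> nat \<Rightarrow> (nat \<Rightarrow> vec) \<Rightarrow> nat set set \<Rightarrow> vec set" where
  "CDiv n r v Sig = {a \<in> Elat n. \<forall>S\<in>Sig. \<exists>m. \<forall>i\<in>S. a i = dotp r m (v i)}"

definition PicZ :: "nat \<Rightarrow> nat \<Rightarrow> (nat \<Rightarrow> vec) \<Rightarrow> nat set set \<Rightarrow> vec set set" where
  "PicZ n r v Sig = cosets (CDiv n r v Sig) (PstarM n r v)"

text \<open>Local data for a cone sigma = cone(v_i : i \<in> S); F_sigma is indexed by S itself.\<close>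
definition Nsig :: "nat \<Rightarrow> (nat \<Rightarrow> vec) \<Rightarrow> nat set \<Rightarrow> vec set" where
  "Nsig r v S = {u. (\<forall>k\<ge>r. u k = 0) \<and>
     (\<exists>c::nat \<Rightarrow> rat. \<forall>k<r. of_int (u k) = (\<Sum>i\<in>S. c i * of_int (v i k)))}"

definition Nsig_dual :: "nat \<Rightarrow> (nat \<Rightarrow> vec) \<Rightarrow> nat set \<Rightarrow> (vec \<Rightarrow> int) set" where
  "Nsig_dual r v S = {phi. \<forall>x\<in>Nsig r v S. \<forall>y\<in>Nsig r v S. phi (x + y) = phi x + phi y}"

definition Fsig_dual :: "nat set \<Rightarrow> vec set" where
  "Fsig_dual S = {a. \<forall>i. i \<notin> S \<longrightarrow> a i = 0}"

definition Psig_star_img :: "nat \<Rightarrow> (nat \<Rightarrow> vec) \<Rightarrow> nat set \<Rightarrow> vec set" where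
  "Psig_star_img r v S = (\<lambda>phi. \<lambda>i. if i \<in> S then phi (v i) else 0) ` Nsig_dual r v S"

definition Ksig :: "nat \<Rightarrow> (nat \<Rightarrow> vec) \<Rightarrow> nat set \<Rightarrow> vec set set" where
  "Ksig r v S = cosets (Fsig_dual S) (Psig_star_img r v S)"

definition restr :: "nat set \<Rightarrow> vec \<Rightarrow> vec" where
  "restr S a = (\<lambda>i. if i \<in> S then a i else 0)"

definition pi_sig :: "nat \<Rightarrow> (nat \<Rightarrow> vec) \<Rightarrow> nat set \<Rightarrow> vec set \<Rightarrow> vec set" where
  "pi_sig r v S X = restr S ` X + Psig_star_img r v S"

text \<open>Direct sum over maximal cones (components outside Sigma_max are the zero coset {0}).\<close>
definition DirSumK :: "nat \<Rightarrow> (nat \<Rightarrow> vec) \<Rightarrow> nat set set \<Rightarrow> (nat set \<Rightarrow> vec set) set" where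
  "DirSumK r v Sig = {Phi. (\<forall>S\<in>max_cones Sig. Phi S \<in> Ksig r v S) \<and>
                          (\<forall>S. S \<notin> max_cones Sig \<longrightarrow> Phi S = 0)}"

definition piK :: "nat \<Rightarrow> (nat \<Rightarrow> vec) \<Rightarrow> nat set set \<Rightarrow> vec set \<Rightarrow> (nat set \<Rightarrow> vec set)" where
  "piK r v Sig X = (\<lambda>S. if S \<in> max_cones Sig then pi_sig r v S X else 0)"

definition Khat :: "nat \<Rightarrow> nat \<Rightarrow> (nat \<Rightarrow> vec) \<Rightarrow> nat set set \<Rightarrow> (nat set \<Rightarrow> vec set) set set" where
  "Khat n r v Sig = cosets (DirSumK r v Sig) (piK r v Sig ` ClZ n r v)"

end

theory Submission
  imports Defs "HOL-Library.FuncSet"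
begin

lemma sing_plus: "{a} + B = (\<lambda>b. a + b) ` B"
  by (auto simp: set_plus_def)

definition grp :: "'a::comm_monoid_add set \<Rightarrow> 'a \<Rightarrow> bool" where
  "grp G e \<longleftrightarrow> e \<in> G \<and> (\<forall>x\<in>G. \<forall>y\<in>G. x + y \<in> G) \<and> (\<forall>x\<in>G. e + x = x)
     \<and> (\<forall>x\<in>G. \<exists>y\<in>G. x + y = e)"

lemma grp_coset_eq:
  fixes H :: "'a::comm_monoid_add set"
  assumes "grp H e" "k \<in> H"
  shows "{g + k} + H = {g} + H"
proof -
  from assms obtain k' where k': "k' \<in> H" "k + k' = e" unfolding grp_def by blast
  have "g + k + h \<in> (\<lambda>b. g + b) ` H" if "h \<in> H" for h
    using assms that unfolding grp_def by (metis add.assoc image_eqI)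
  moreover have "g + h \<in> (\<lambda>b. g + k + b) ` H" if "h \<in> H" for h
  proof -
    have "g + h = g + k + (k' + h)" using k' assms that unfolding grp_def
      by (metis add.assoc)
    moreover have "k' + h \<in> H" using k' that assms unfolding grp_def by blast
    ultimately show ?thesis by blast
  qed
  ultimately show ?thesis unfolding sing_plus by blast
qed

lemma lagrange:
  fixes G :: "'a::comm_monoid_add set"
  assumes fin: "finite G" and gG: "grp G e" and HG: "H \<subseteq> G" and gH: "grp H e"
  shows "card G = card (cosets G H) * card H"
proof -
  have un: "\<Union>(cosets G H) = G"
  proof
    show "\<Union>(cosets G H) \<subseteq> G"
      using gG HG unfolding cosets_def sing_plus grp_def by blast
    show "G \<subseteq> \<Union>(cosets G H)"
    proof
      fix g assume g: "g \<in> G"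
      have "g = g + e" using gG g unfolding grp_def by (metis add.commute)
      moreover have "e \<in> H" using gH unfolding grp_def by blast
      ultimately have "g \<in> {g} + H" unfolding sing_plus by blast
      then show "g \<in> \<Union>(cosets G H)" using g unfolding cosets_def by blast
    qed
  qed
  have cardc: "card X = card H" if "X \<in> cosets G H" for X
  proof -
    from that obtain g where g: "g \<in> G" "X = {g} + H" unfolding cosets_def by blast
    obtain g' where g': "g' \<in> G" "g + g' = e" using gG g unfolding grp_def by blast
    have "inj_on (\<lambda>b. g + b) H"
    proof
      fix x y assume xy: "x \<in> H" "y \<in> H" "g + x = g + y"
      have "x = g' + (g + x)" using g' xy HG gG unfolding grp_def
        by (metis add.assoc add.commute subsetD)
      also have "\<dots> = g' + (g + y)" using xy by simp
      also have "\<dots> = y" using g' xy HG gG unfolding grp_def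
        by (metis add.assoc add.commute subsetD)
      finally show "x = y" .
    qed
    then show ?thesis using g by (simp add: sing_plus card_image)
  qed
  have disj: "X \<inter> Y = {}" if "X \<in> cosets G H" "Y \<in> cosets G H" "X \<noteq> Y" for X Y
  proof (rule ccontr)
    assume "X \<inter> Y \<noteq> {}"
    from that obtain g1 g2 where g: "X = {g1} + H" "Y = {g2} + H" "g1 \<in> G" "g2 \<in> G"
      unfolding cosets_def by blast
    from \<open>X \<inter> Y \<noteq> {}\<close> obtain h1 h2 where h: "h1 \<in> H" "h2 \<in> H" "g1 + h1 = g2 + h2"
      unfolding g sing_plus by auto
    obtain h1' where h1': "h1' \<in> H" "h1 + h1' = e" using gH h unfolding grp_def by blast
    have "g1 = g1 + h1 + h1'" using h1' gG g unfolding grp_def by (metis add.assoc add.commute)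
    also have "\<dots> = g2 + (h2 + h1')" using h by (simp add: add.assoc)
    finally have "{g1} + H = {g2 + (h2 + h1')} + H" by simp
    also have "\<dots> = {g2} + H" using grp_coset_eq[OF gH] h h1' gH unfolding grp_def by blast
    finally show False using that g by simp
  qed
  have "finite (cosets G H)" using fin unfolding cosets_def by simp
  from card_partition[OF this, of "card H"] have "card H * card (cosets G H) = card (\<Union>(cosets G H))"
    using un fin cardc disj by auto
  then show ?thesis using un by (simp add: mult.commute)
qed

lemma card_image_same_kernel:
  assumes "\<And>a b. a \<in> E \<Longrightarrow> b \<in> E \<Longrightarrow> f a = f b \<longleftrightarrow> g a = g b"
  shows "card (f ` E) = card (g ` E)"
proof -
  define h where "h = (\<lambda>y. g (inv_into E f y))"
  have "h ` (f ` E) = g ` E"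
  proof -
    have "h (f a) = g a" if "a \<in> E" for a
      unfolding h_def using assms[of "inv_into E f (f a)" a] that
      by (simp add: inv_into_into f_inv_into_f)
    then show ?thesis by (auto simp: image_iff)
  qed
  moreover have "inj_on h (f ` E)"
  proof
    fix x y assume "x \<in> f ` E" "y \<in> f ` E" "h x = h y"
    then show "x = y" unfolding h_def using assms
      by (metis f_inv_into_f inv_into_into)
  qed
  ultimately show ?thesis by (metis card_image)
qed

lemma nsig_add: "x \<in> Nsig r w I \<Longrightarrow> y \<in> Nsig r w I \<Longrightarrow> x + y \<in> Nsig r w I"
proof -
  assume "x \<in> Nsig r w I" "y \<in> Nsig r w I"
  then obtain c d :: "nat \<Rightarrow> rat" where c: "\<forall>k<r. of_int (x k) = (\<Sum>i\<in>I. c i * of_int (w i k))"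
    and d: "\<forall>k<r. of_int (y k) = (\<Sum>i\<in>I. d i * of_int (w i k))"
    and z: "\<forall>k\<ge>r. x k = 0" "\<forall>k\<ge>r. y k = 0"
    unfolding Nsig_def by blast
  have "\<forall>k<r. of_int ((x + y) k) = (\<Sum>i\<in>I. (c i + d i) * of_int (w i k))"
    using c d by (simp add: distrib_right sum.distrib)
  then show ?thesis using z unfolding Nsig_def by auto
qed

lemma nsig_smult: "x \<in> Nsig r w I \<Longrightarrow> (\<lambda>k. a * x k) \<in> Nsig r w I"
proof -
  assume "x \<in> Nsig r w I"
  then obtain c :: "nat \<Rightarrow> rat" where c: "\<forall>k<r. of_int (x k) = (\<Sum>i\<in>I. c i * of_int (w i k))"
    and z: "\<forall>k\<ge>r. x k = 0"
    unfolding Nsig_def by blast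
  have "\<forall>k<r. of_int (a * x k) = (\<Sum>i\<in>I. (of_int a * c i) * of_int (w i k))"
    using c by (simp add: sum_distrib_left mult.assoc)
  then show ?thesis using z unfolding Nsig_def by auto
qed

lemma nsig_zero: "0 \<in> Nsig r w I"
  unfolding Nsig_def by (auto intro!: exI[of _ "\<lambda>_. 0"])

lemma nsig_minus: "x \<in> Nsig r w I \<Longrightarrow> y \<in> Nsig r w I \<Longrightarrow> x - y \<in> Nsig r w I"
proof -
  assume a: "x \<in> Nsig r w I" "y \<in> Nsig r w I"
  have "(\<lambda>k. (-1) * y k) \<in> Nsig r w I" using nsig_smult a(2) by blast
  moreover have "x - y = x + (\<lambda>k. (-1) * y k)" by (auto simp: fun_eq_iff)
  ultimately show ?thesis using nsig_add a(1) by metis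
qed

lemma hom_zero:
  fixes phi :: "vec \<Rightarrow> 'b::comm_ring_1"
  assumes "\<forall>x\<in>Nsig r w I. \<forall>y\<in>Nsig r w I. phi (x+y) = phi x + phi y"
  shows "phi 0 = 0"
  using assms nsig_zero[of r w I] by (metis add.right_neutral add_left_cancel)

lemma hom_smult:
  fixes phi :: "vec \<Rightarrow> 'b::comm_ring_1"
  assumes h: "\<forall>x\<in>Nsig r w I. \<forall>y\<in>Nsig r w I. phi (x+y) = phi x + phi y"
    and x: "x \<in> Nsig r w I"
  shows "phi (\<lambda>k. a * x k) = of_int a * phi x"
proof -
  have nat: "phi (\<lambda>k. int n * x k) = of_nat n * phi x" for n
  proof (induction n)
    case 0 then show ?case using hom_zero[OF h] by (simp add: zero_fun_def)
  next
    case (Suc n)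
    have "(\<lambda>k. int (Suc n) * x k) = (\<lambda>k. int n * x k) + x" by (auto simp: fun_eq_iff algebra_simps)
    then have "phi (\<lambda>k. int (Suc n) * x k) = phi (\<lambda>k. int n * x k) + phi x"
      using h x nsig_smult[OF x] by metis
    then show ?case using Suc by (simp add: algebra_simps)
  qed
  show ?thesis
  proof (cases "a \<ge> 0")
    case True
    then obtain n where "a = int n" using nonneg_int_cases by blast
    then show ?thesis using nat by simp
  next
    case False
    then obtain n where n: "a = - int n" by (metis nonneg_int_cases neg_0_le_iff_le le_cases minus_minus)
    have "(\<lambda>k. int n * x k) + (\<lambda>k. a * x k) = 0" using n by (auto simp: fun_eq_iff)
    then have "phi (\<lambda>k. int n * x k) + phi (\<lambda>k. a * x k) = 0"
      using h nsig_smult[OF x] hom_zero[OF h] by metis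
    then show ?thesis using nat n by (simp add: add_eq_0_iff)
  qed
qed

lemma vec_bezout:
  fixes x :: vec
  shows "\<exists>m g. g \<ge> 0 \<and> (\<forall>k<r. g dvd x k) \<and> (\<Sum>k<r. m k * x k) = g \<and> (g = 0 \<longrightarrow> (\<forall>k<r. x k = 0))"
proof (induction r)
  case 0 then show ?case by (auto intro!: exI[of _ "\<lambda>_. 0"])
next
  case (Suc r)
  then obtain m g where mg: "g \<ge> 0" "\<forall>k<r. g dvd x k" "(\<Sum>k<r. m k * x k) = g" "g = 0 \<longrightarrow> (\<forall>k<r. x k = 0)"
    by blast
  obtain u v where uv: "u * g + v * x r = gcd g (x r)" using bezout_int by blast
  define m' where "m' = (\<lambda>k. if k = r then v else u * m k)"
  have "(\<Sum>k<Suc r. m' k * x k) = u * (\<Sum>k<r. m k * x k) + v * x r"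
    unfolding m'_def by (simp add: sum_distrib_left mult.assoc)
  also have "\<dots> = gcd g (x r)" using uv mg by simp
  finally have s: "(\<Sum>k<Suc r. m' k * x k) = gcd g (x r)" .
  have d: "\<forall>k<Suc r. gcd g (x r) dvd x k"
    using mg(2) by (metis dvd_trans gcd_dvd1 gcd_dvd2 less_Suc_eq)
  show ?case using s d mg(4)
    by (intro exI[of _ m'] exI[of _ "gcd g (x r)"]) (auto simp: less_Suc_eq)
qed

lemma nsig_empty: "Nsig r w {} = {0}"
  unfolding Nsig_def by (auto simp: fun_eq_iff) (meson not_le)

lemma ext_hom:
  fixes phi :: "vec \<Rightarrow> 'b::comm_ring_1"
  assumes "finite I" "\<forall>x\<in>Nsig r w I. \<forall>y\<in>Nsig r w I. phi (x+y) = phi x + phi y"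
  shows "\<exists>M. \<forall>u\<in>Nsig r w I. (\<Sum>k<r. M k * of_int (u k)) = phi u"
  using assms
proof (induction I arbitrary: w phi rule: finite_induct)
  case empty
  then show ?case using hom_zero[OF empty(1)] nsig_empty[of r w]
    by (intro exI[of _ "\<lambda>_. 0"]) auto
next
  case (insert j I)
  show ?case
  proof (cases "\<forall>k<r. w j k = 0")
    case True
    have "Nsig r w (insert j I) = Nsig r w I"
      unfolding Nsig_def using insert(1,2) True by simp
    then show ?thesis using insert(3)[of w phi] insert(4) by simp
  next
    case False
    obtain m g where mg: "g \<ge> 0" "\<forall>k<r. g dvd w j k" "(\<Sum>k<r. m k * w j k) = g"
      "g = 0 \<longrightarrow> (\<forall>k<r. w j k = 0)"
      using vec_bezout[of r "w j"] by blast
    have gpos: "g \<noteq> 0" using mg(4) False by blast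
    define wp where "wp = (\<lambda>k. if k < r then w j k div g else 0)"
    have wjk: "w j k = g * wp k" if "k < r" for k using mg(2) that unfolding wp_def by simp
    define t where "t = (\<lambda>u::vec. \<Sum>k<r. m k * u k)"
    define w' where "w' = (\<lambda>i k. if k < r then w i k - t (w i) * wp k else 0)"
    define L where "L = Nsig r w (insert j I)"
    define L' where "L' = Nsig r w' I"
    have wpL: "wp \<in> L"
    proof -
      have "\<forall>k<r. (of_int (wp k)::rat) = (\<Sum>i\<in>insert j I. (if i = j then 1 / of_int g else 0) * of_int (w i k))"
      proof (intro allI impI)
        fix k assume k: "k < r"
        have "(\<Sum>i\<in>insert j I. (if i = j then 1 / of_int g else 0) * (of_int (w i k)::rat))
            = 1 / of_int g * of_int (w j k)"
          using insert(1,2) by (simp add: if_distrib cong: if_cong) (intro sum.neutral, auto)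
        also have "\<dots> = of_int (wp k)" using wjk[OF k] gpos by simp
        finally show "(of_int (wp k)::rat) = (\<Sum>i\<in>insert j I. (if i = j then 1 / of_int g else 0) * of_int (w i k))" by simp
      qed
      then show ?thesis unfolding L_def Nsig_def wp_def by auto
    qed
    have L'L: "L' \<subseteq> L"
    proof
      fix u assume "u \<in> L'"
      then obtain c :: "nat \<Rightarrow> rat" where c: "\<forall>k<r. of_int (u k) = (\<Sum>i\<in>I. c i * of_int (w' i k))"
        and z: "\<forall>k\<ge>r. u k = 0" unfolding L'_def Nsig_def by blast
      define c' where "c' = c(j := - (\<Sum>i\<in>I. c i * of_int (t (w i))) / of_int g)"
      have "of_int (u k) = (\<Sum>i\<in>insert j I. c' i * of_int (w i k))" if k: "k < r" for k
      proof -
        have "of_int (u k) = (\<Sum>i\<in>I. c i * (of_int (w i k) - of_int (t (w i)) * of_int (wp k)))"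
          using c k unfolding w'_def by simp
        also have "\<dots> = (\<Sum>i\<in>I. c i * of_int (w i k)) - (\<Sum>i\<in>I. c i * of_int (t (w i))) * of_int (wp k)"
          by (simp add: right_diff_distrib sum_subtractf sum_distrib_right mult.assoc)
        also have "\<dots> = c' j * of_int (w j k) + (\<Sum>i\<in>I. c' i * of_int (w i k))"
        proof -
          have "(\<Sum>i\<in>I. c' i * of_int (w i k)) = (\<Sum>i\<in>I. c i * of_int (w i k))"
            unfolding c'_def using insert(2) by (intro sum.cong) auto
          moreover have "c' j * of_int (w j k) = - (\<Sum>i\<in>I. c i * of_int (t (w i))) * of_int (wp k)"
            unfolding c'_def using wjk[OF k] gpos by simp
          ultimately show ?thesis by simp
        qed
        also have "\<dots> = (\<Sum>i\<in>insert j I. c' i * of_int (w i k))"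
          using insert(1,2) by simp
        finally show ?thesis .
      qed
      then show "u \<in> L" unfolding L_def Nsig_def using z by blast
    qed
    have decomp: "u - (\<lambda>k. t u * wp k) \<in> L'" if u: "u \<in> L" for u
    proof -
      obtain c :: "nat \<Rightarrow> rat" where c: "\<forall>k<r. of_int (u k) = (\<Sum>i\<in>insert j I. c i * of_int (w i k))"
        and z: "\<forall>k\<ge>r. u k = 0" using u unfolding L_def Nsig_def by blast
      have ts: "(of_int (t u)::rat) = c j * of_int g + (\<Sum>i\<in>I. c i * of_int (t (w i)))"
      proof -
        have "(of_int (t u)::rat) = (\<Sum>k<r. of_int (m k) * (\<Sum>i\<in>insert j I. c i * of_int (w i k)))"
          unfolding t_def using c by simp
        also have "\<dots> = (\<Sum>i\<in>insert j I. c i * (\<Sum>k<r. of_int (m k) * of_int (w i k)))"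
          by (simp add: sum_distrib_left sum_distrib_right sum.swap[of _ "{..<r}"] algebra_simps)
        also have "\<dots> = (\<Sum>i\<in>insert j I. c i * of_int (t (w i)))"
          unfolding t_def by simp
        also have "\<dots> = c j * of_int g + (\<Sum>i\<in>I. c i * of_int (t (w i)))"
        proof -
          have "(\<Sum>k<r. rat_of_int (m k) * rat_of_int (w j k)) = of_int g"
            unfolding mg(3)[symmetric] by simp
          then show ?thesis using insert(1,2) unfolding t_def by simp
        qed
        finally show ?thesis .
      qed
      have "of_int ((u - (\<lambda>k. t u * wp k)) k) = (\<Sum>i\<in>I. c i * of_int (w' i k))" if k: "k < r" for k
      proof -
        have "(\<Sum>i\<in>I. c i * of_int (w' i k)) = (\<Sum>i\<in>I. c i * (of_int (w i k) - of_int (t (w i)) * of_int (wp k)))"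
          using k unfolding w'_def by simp
        also have "\<dots> = (\<Sum>i\<in>I. c i * of_int (w i k)) - (\<Sum>i\<in>I. c i * of_int (t (w i))) * of_int (wp k)"
          by (simp add: right_diff_distrib sum_subtractf sum_distrib_right mult.assoc)
        finally have A: "(\<Sum>i\<in>I. c i * of_int (w' i k)) = \<dots>" .
        have B: "(of_int (u k)::rat) = c j * of_int g * of_int (wp k) + (\<Sum>i\<in>I. c i * of_int (w i k))"
          using c k insert(1,2) wjk[OF k] by simp
        show ?thesis using A B ts by (simp add: algebra_simps)
      qed
      moreover have "\<forall>k\<ge>r. (u - (\<lambda>k. t u * wp k)) k = 0" using z unfolding wp_def by simp
      ultimately show ?thesis unfolding L'_def Nsig_def by blast
    qed
    have hL: "\<forall>x\<in>L. \<forall>y\<in>L. phi (x+y) = phi x + phi y" using insert(4) unfolding L_def .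
    have hL': "\<forall>x\<in>Nsig r w' I. \<forall>y\<in>Nsig r w' I. phi (x+y) = phi x + phi y"
      using hL L'L unfolding L'_def by blast
    obtain M'' where M'': "\<forall>u\<in>L'. (\<Sum>k<r. M'' k * of_int (u k)) = phi u"
      using insert(3)[OF hL'] unfolding L'_def by blast
    define D where "D = (\<lambda>u::vec. \<Sum>k<r. M'' k * of_int (u k))"
    define \<alpha> where "\<alpha> = phi wp - D wp"
    define M where "M = (\<lambda>k. M'' k + \<alpha> * of_int (m k))"
    have "(\<Sum>k<r. M k * of_int (u k)) = phi u" if u: "u \<in> L" for u
    proof -
      define u' where "u' = u - (\<lambda>k. t u * wp k)"
      have u'L': "u' \<in> L'" using decomp[OF u] unfolding u'_def .
      have sL: "(\<lambda>k. t u * wp k) \<in> L" using nsig_smult wpL unfolding L_def by blast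
      have "u = u' + (\<lambda>k. t u * wp k)" unfolding u'_def by simp
      then have "phi u = phi u' + phi (\<lambda>k. t u * wp k)"
        using hL u'L' L'L sL by (metis subsetD)
      also have "\<dots> = D u' + of_int (t u) * phi wp"
        using M'' u'L' hom_smult[OF insert(4), of wp "t u"] wpL unfolding D_def L_def by simp
      also have "D u' = D u - of_int (t u) * D wp"
        unfolding D_def u'_def by (simp add: algebra_simps sum_subtractf sum_distrib_left)
      finally have P: "phi u = D u - of_int (t u) * D wp + of_int (t u) * phi wp" .
      have "(\<Sum>k<r. M k * of_int (u k)) = D u + \<alpha> * (\<Sum>k<r. of_int (m k) * of_int (u k))"
        unfolding M_def D_def by (simp add: distrib_right sum.distrib sum_distrib_left mult.assoc)
      moreover have "(\<Sum>k<r. of_int (m k) * of_int (u k)) = (of_int (t u) :: 'b)" unfolding t_def by simp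
      ultimately have "(\<Sum>k<r. M k * of_int (u k)) = D u + \<alpha> * of_int (t u)" by simp
      also have "\<dots> = phi u" using P unfolding \<alpha>_def by (simp add: algebra_simps)
      finally show ?thesis .
    qed
    then show ?thesis unfolding L_def by blast
  qed
qed

definition subgrp :: "'a::ab_group_add set \<Rightarrow> bool" where
  "subgrp H \<longleftrightarrow> 0 \<in> H \<and> (\<forall>x\<in>H. \<forall>y\<in>H. x + y \<in> H) \<and> (\<forall>x\<in>H. - x \<in> H)"

lemma subgrp_diff: "subgrp H \<Longrightarrow> x \<in> H \<Longrightarrow> y \<in> H \<Longrightarrow> x - y \<in> H"
  unfolding subgrp_def by (metis diff_conv_add_uminus)

lemma coset_eq_iff:
  assumes "subgrp H"
  shows "{a} + H = {b} + H \<longleftrightarrow> a - b \<in> H"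
proof
  assume "{a} + H = {b} + H"
  moreover have "a \<in> {a} + H"
  proof -
    have "a = a + 0" by simp
    moreover have "0 \<in> H" using assms unfolding subgrp_def by blast
    ultimately show ?thesis unfolding sing_plus by blast
  qed
  ultimately have "a \<in> {b} + H" by simp
  then show "a - b \<in> H" unfolding sing_plus by auto
next
  assume h: "a - b \<in> H"
  have "{a} + H \<subseteq> {b} + H"
  proof
    fix x assume "x \<in> {a} + H"
    then obtain h' where "h' \<in> H" "x = a + h'" unfolding sing_plus by auto
    moreover then have "x = b + ((a - b) + h')" by (simp add: algebra_simps)
    moreover have "(a - b) + h' \<in> H" using h assms calculation(1) unfolding subgrp_def by blast
    ultimately have "x = b + ((a - b) + h')" "(a - b) + h' \<in> H" by blast+
    then show "x \<in> {b} + H" unfolding sing_plus by blast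
  qed
  moreover have "{b} + H \<subseteq> {a} + H"
  proof
    fix x assume "x \<in> {b} + H"
    then obtain h' where "h' \<in> H" "x = b + h'" unfolding sing_plus by auto
    moreover then have "x = a + (- (a - b) + h')" by (simp add: algebra_simps)
    moreover have "- (a - b) + h' \<in> H" using h assms calculation(1) unfolding subgrp_def by blast
    ultimately have "x = a + (- (a - b) + h')" "- (a - b) + h' \<in> H" by blast+
    then show "x \<in> {a} + H" unfolding sing_plus by blast
  qed
  ultimately show "{a} + H = {b} + H" by blast
qed

lemma subgrp_plus_self: "subgrp H \<Longrightarrow> H + H = H"
  unfolding subgrp_def set_plus_def by (auto, metis add.right_neutral)

lemma coset_add:
  assumes "subgrp H"
  shows "({a} + H) + ({b} + H) = {a + b} + H"
proof -
  have "({a} + H) + ({b} + H) = ({a} + {b}) + (H + H)" by (simp add: ac_simps)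
  also have "\<dots> = {a + b} + H" using subgrp_plus_self[OF assms] by (simp add: sing_plus)
  finally show ?thesis .
qed

lemma dotp_add: "dotp r m (x + y) = dotp r m x + dotp r m y"
  unfolding dotp_def by (simp add: distrib_left sum.distrib)

lemma Q_subgrp: "subgrp (Psig_star_img r v S)"
proof -
  let ?T = "\<lambda>phi. \<lambda>i. if i \<in> S then phi (v i) else (0::int)"
  have z: "(\<lambda>_. 0::int) \<in> Nsig_dual r v S" unfolding Nsig_dual_def by simp
  have "0 = ?T (\<lambda>_. 0)" by (auto simp: fun_eq_iff)
  then have "0 \<in> Psig_star_img r v S" unfolding Psig_star_img_def using z by (rule image_eqI)
  moreover have "x + y \<in> Psig_star_img r v S" if xy: "x \<in> Psig_star_img r v S" "y \<in> Psig_star_img r v S" for x y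
  proof -
    obtain p q where "p \<in> Nsig_dual r v S" "q \<in> Nsig_dual r v S" "x = ?T p" "y = ?T q"
      using xy unfolding Psig_star_img_def by blast
    moreover have "(\<lambda>z. p z + q z) \<in> Nsig_dual r v S" using calculation unfolding Nsig_dual_def by auto
    moreover have "x + y = ?T (\<lambda>z. p z + q z)" using calculation by (auto simp: fun_eq_iff)
    ultimately show ?thesis unfolding Psig_star_img_def by (intro image_eqI[where x="\<lambda>z. p z + q z"]) auto
  qed
  moreover have "- x \<in> Psig_star_img r v S" if xy: "x \<in> Psig_star_img r v S" for x
  proof -
    obtain p where "p \<in> Nsig_dual r v S" "x = ?T p"
      using xy unfolding Psig_star_img_def by blast
    moreover have "(\<lambda>z. - p z) \<in> Nsig_dual r v S" using calculation unfolding Nsig_dual_def by auto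
    moreover have "- x = ?T (\<lambda>z. - p z)" using calculation by (auto simp: fun_eq_iff)
    ultimately show ?thesis unfolding Psig_star_img_def by (intro image_eqI[where x="\<lambda>z. - p z"]) auto
  qed
  ultimately show ?thesis unfolding subgrp_def by blast
qed

lemma dotp_in_Q: "(\<lambda>i. if i \<in> S then dotp r m (v i) else 0) \<in> Psig_star_img r v S"
proof -
  have "dotp r m \<in> Nsig_dual r v S" unfolding Nsig_dual_def by (simp add: dotp_add)
  then show ?thesis unfolding Psig_star_img_def by blast
qed

lemma clear_denom:
  fixes M :: "nat \<Rightarrow> rat"
  shows "\<exists>d::int. d > 0 \<and> (\<exists>m::vec. \<forall>k<r. of_int (m k) = of_int d * M k)"
proof (induction r)
  case 0 then show ?case by (intro exI[of _ 1]) auto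
next
  case (Suc r)
  then obtain d m where dm: "d > 0" "\<forall>k<r. of_int (m k) = of_int d * M k" by blast
  obtain p q where pq: "quotient_of (M r) = (p, q)" by (cases "quotient_of (M r)")
  have q: "q > 0" "M r = of_int p / of_int q" using quotient_of_denom_pos[OF pq] quotient_of_div[OF pq] by auto
  define m' where "m' = (\<lambda>k. if k = r then d * p else q * m k)"
  have "\<forall>k<Suc r. of_int (m' k) = of_int (d * q) * M k"
  proof (intro allI impI)
    fix k assume "k < Suc r"
    then consider "k < r" | "k = r" by linarith
    then show "of_int (m' k) = of_int (d * q) * M k"
    proof cases
      case 1 then show ?thesis using dm unfolding m'_def by simp
    next
      case 2 then show ?thesis using q unfolding m'_def by simp
    qed
  qed
  then show ?case using dm q by (intro exI[of _ "d * q"]) auto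
qed

lemma Ksig_finite:
  assumes fS: "finite S" and vz: "\<forall>i\<in>S. \<forall>k\<ge>r. v i k = 0" and li: "lin_indep_Q r v S"
  shows "finite (Ksig r v S)"
proof -
  define coef where "coef u = (SOME c::nat\<Rightarrow>rat. \<forall>k<r. of_int (u k) = (\<Sum>i\<in>S. c i * of_int (v i k)))" for u :: vec
  have coefP: "\<forall>k<r. of_int (u k) = (\<Sum>i\<in>S. coef u i * of_int (v i k))" if "u \<in> Nsig r v S" for u
  proof -
    from that obtain c :: "nat \<Rightarrow> rat" where "\<forall>k<r. of_int (u k) = (\<Sum>i\<in>S. c i * of_int (v i k))"
      unfolding Nsig_def by blast
    then show ?thesis unfolding coef_def
      by (rule someI[of "\<lambda>c. \<forall>k<r. of_int (u k) = (\<Sum>i\<in>S. c i * (of_int (v i k)::rat))"])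
  qed
  have uniq: "c i = c' i" if "\<forall>k<r. (\<Sum>i\<in>S. c i * of_int (v i k)) = (\<Sum>i\<in>S. c' i * (of_int (v i k)::rat))" "i \<in> S"
    for c c' i
  proof -
    have "\<forall>k<r. (\<Sum>i\<in>S. (c i - c' i) * of_int (v i k)) = (0::rat)"
      using that(1) by (simp add: left_diff_distrib sum_subtractf)
    then show ?thesis using li that(2) unfolding lin_indep_Q_def by fastforce
  qed
  have delta: "(\<Sum>l\<in>S. (if l = i then 1 else 0) * (x l::rat)) = x i" if "i \<in> S" for i x
  proof -
    have "(\<Sum>l\<in>S. (if l = i then 1 else 0) * (x l::rat)) = (\<Sum>l\<in>S. if l = i then x l else 0)"
      by (rule sum.cong) auto
    then show ?thesis using fS that by simp
  qed
  have vin: "v i \<in> Nsig r v S" if "i \<in> S" for i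
  proof -
    have "\<forall>k<r. of_int (v i k) = (\<Sum>l\<in>S. (if l = i then 1 else 0) * (of_int (v l k)::rat))"
      using delta[OF that] by simp
    then have "\<exists>c::nat\<Rightarrow>rat. \<forall>k<r. of_int (v i k) = (\<Sum>l\<in>S. c l * (of_int (v l k)::rat))"
      by (rule exI[of _ "\<lambda>l. if l = i then 1 else 0"])
    then show ?thesis using vz that unfolding Nsig_def by blast
  qed
  have coef_v: "coef (v i) j = (if j = i then 1 else 0)" if "i \<in> S" "j \<in> S" for i j
  proof -
    have "\<forall>k<r. (\<Sum>l\<in>S. coef (v i) l * of_int (v l k)) = (\<Sum>l\<in>S. (if l = i then 1 else 0) * (of_int (v l k)::rat))"
      using coefP[OF vin[OF that(1)]] delta[OF that(1)] by simp
    from uniq[OF this that(2)] show ?thesis by simp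
  qed
  have coef_add: "coef (x + y) j = coef x j + coef y j" if "x \<in> Nsig r v S" "y \<in> Nsig r v S" "j \<in> S" for x y j
  proof -
    have "\<forall>k<r. (\<Sum>l\<in>S. coef (x + y) l * of_int (v l k)) = (\<Sum>l\<in>S. (coef x l + coef y l) * (of_int (v l k)::rat))"
      using coefP[OF nsig_add[OF that(1,2)]] coefP[OF that(1)] coefP[OF that(2)]
      by (simp add: distrib_right sum.distrib)
    from uniq[OF this that(3)] show ?thesis .
  qed
  have dual: "\<exists>dm. fst dm > (0::int) \<and> (\<forall>i\<in>S. dotp r (snd dm) (v i) = (if i = j then fst dm else 0))"
    if j: "j \<in> S" for j
  proof -
    have "\<forall>x\<in>Nsig r v S. \<forall>y\<in>Nsig r v S. coef (x + y) j = coef x j + coef y j"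
      using coef_add j by blast
    from ext_hom[OF fS this] obtain M :: "nat \<Rightarrow> rat"
      where M: "\<forall>u\<in>Nsig r v S. (\<Sum>k<r. M k * of_int (u k)) = coef u j" by blast
    obtain d m where dm: "d > 0" "\<forall>k<r. of_int (m k) = of_int d * M k" using clear_denom[of r M] by blast
    have "dotp r m (v i) = (if i = j then d else 0)" if i: "i \<in> S" for i
    proof -
      have "(of_int (dotp r m (v i))::rat) = (\<Sum>k<r. of_int d * M k * of_int (v i k))"
        unfolding dotp_def using dm(2) by simp
      also have "\<dots> = of_int d * (\<Sum>k<r. M k * of_int (v i k))"
        by (simp add: sum_distrib_left mult.assoc)
      also have "\<dots> = of_int d * coef (v i) j"
        using M vin[OF i] by simp
      also have "\<dots> = of_int (if i = j then d else 0)" using coef_v[OF i j] by auto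
      finally show ?thesis by (simp only: of_int_eq_iff)
    qed
    then show ?thesis using dm(1) by (intro exI[of _ "(d, m)"]) auto
  qed
  then have "\<forall>j\<in>S. \<exists>dm. fst dm > (0::int) \<and> (\<forall>i\<in>S. dotp r (snd dm) (v i) = (if i = j then fst dm else 0))"
    by blast
  then have "\<exists>f. \<forall>j\<in>S. fst (f j) > (0::int) \<and> (\<forall>i\<in>S. dotp r (snd (f j)) (v i) = (if i = j then fst (f j) else 0))"
    by (rule bchoice)
  then obtain f where f: "\<forall>j\<in>S. fst (f j) > (0::int) \<and> (\<forall>i\<in>S. dotp r (snd (f j)) (v i) = (if i = j then fst (f j) else 0))"
    by (elim exE)
  define dd where "dd j = fst (f j)" for j
  define mm where "mm j = snd (f j)" for j
  have ddpos: "dd j > 0" if "j \<in> S" for j using f that unfolding dd_def by blast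
  have mmv: "dotp r (mm j) (v i) = (if i = j then dd j else 0)" if "i \<in> S" "j \<in> S" for i j
    using f that unfolding dd_def mm_def by blast
  define B where "B = (\<Union>j\<in>S. {0..<dd j})"
  define R where "R = {b::vec. \<forall>x. (x \<in> S \<longrightarrow> b x \<in> B) \<and> (x \<notin> S \<longrightarrow> b x = 0)}"
  have finR: "finite R" unfolding R_def B_def by (rule finite_set_of_finite_funs) (use fS in auto)
  have "Ksig r v S \<subseteq> (\<lambda>b. {b} + Psig_star_img r v S) ` R"
  proof
    fix X assume "X \<in> Ksig r v S"
    then obtain a where a: "a \<in> Fsig_dual S" "X = {a} + Psig_star_img r v S"
      unfolding Ksig_def cosets_def by blast
    define b where "b = (\<lambda>i. if i \<in> S then a i mod dd i else 0)"
    define qq where "qq = (\<lambda>i. a i div dd i)"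
    define phi where "phi = (\<lambda>x. \<Sum>j\<in>S. qq j * dotp r (mm j) x)"
    have phid: "phi \<in> Nsig_dual r v S" unfolding Nsig_dual_def phi_def
      by (simp add: dotp_add distrib_left sum.distrib)
    have "a - b = (\<lambda>i. if i \<in> S then phi (v i) else 0)"
    proof
      fix i show "(a - b) i = (if i \<in> S then phi (v i) else 0)"
      proof (cases "i \<in> S")
        case True
        have "phi (v i) = (\<Sum>j\<in>S. qq j * (if i = j then dd j else 0))"
          unfolding phi_def using mmv True by simp
        also have "\<dots> = qq i * dd i" using fS True by (simp add: if_distrib cong: if_cong)
        also have "\<dots> = a i - a i mod dd i" unfolding qq_def by (simp add: minus_mod_eq_div_mult)
        finally show ?thesis using True unfolding b_def by simp
      next
        case False
        then show ?thesis using a(1) unfolding b_def Fsig_dual_def by simp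
      qed
    qed
    then have "a - b \<in> Psig_star_img r v S" unfolding Psig_star_img_def using phid by blast
    then have "X = {b} + Psig_star_img r v S" using a(2) coset_eq_iff[OF Q_subgrp] by blast
    moreover have "b \<in> R" unfolding R_def B_def b_def using ddpos by (auto intro: pos_mod_bound)
    ultimately show "X \<in> (\<lambda>b. {b} + Psig_star_img r v S) ` R" by blast
  qed
  then show ?thesis using finR finite_subset by blast
qed

lemma max_exists:
  assumes "finite Sig" "S \<in> Sig" "\<forall>T\<in>Sig. finite T"
  shows "\<exists>T\<in>max_cones Sig. S \<subseteq> T"
proof -
  define A where "A = {T\<in>Sig. S \<subseteq> T}"
  have fA: "finite A" "A \<noteq> {}" using assms unfolding A_def by auto
  have "Max (card ` A) \<in> card ` A" using fA by (intro Max_in) auto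
  then obtain T where T: "T \<in> A" "card T = Max (card ` A)" by (auto elim: imageE)
  have "T' = T" if "T' \<in> Sig" "T \<subseteq> T'" for T'
  proof -
    have "T' \<in> A" using that T(1) unfolding A_def by auto
    then have "card T' \<le> card T" using T(2) fA by simp
    then show ?thesis using card_seteq[of T' T] that assms(3) by auto
  qed
  then show ?thesis using T(1) unfolding A_def max_cones_def by auto
qed

lemma dotp_add_left: "dotp r (m + m') x = dotp r m x + dotp r m' x"
  unfolding dotp_def by (simp add: distrib_right sum.distrib)

lemma dotp_uminus_left: "dotp r (- m) x = - dotp r m x"
  unfolding dotp_def by (simp add: sum_negf)

lemma dotp_zero_left: "dotp r 0 x = 0"
  unfolding dotp_def by simp

lemma P_subgrp: "subgrp (PstarM n r v)"
proof -
  let ?p = "\<lambda>m. (\<lambda>i. if i < n then dotp r m (v i) else 0) :: vec"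
  have "0 = ?p 0" by (auto simp: fun_eq_iff dotp_zero_left)
  moreover have "?p m + ?p m' = ?p (m + m')" for m m' by (auto simp: fun_eq_iff dotp_add_left)
  moreover have "- ?p m = ?p (- m)" for m by (auto simp: fun_eq_iff dotp_uminus_left)
  ultimately show ?thesis unfolding subgrp_def PstarM_def by auto
qed

lemma E_subgrp: "subgrp (Elat n)"
  unfolding subgrp_def Elat_def by auto

lemma C_subgrp: "subgrp (CDiv n r v Sig)"
proof -
  have "0 \<in> CDiv n r v Sig" unfolding CDiv_def Elat_def
    by (auto intro!: exI[of _ 0] simp: dotp_zero_left)
  moreover have "x + y \<in> CDiv n r v Sig" if "x \<in> CDiv n r v Sig" "y \<in> CDiv n r v Sig" for x y
  proof -
    have "\<exists>m. \<forall>i\<in>S. (x + y) i = dotp r m (v i)" if S: "S \<in> Sig" for S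
    proof -
      obtain m m' where "\<forall>i\<in>S. x i = dotp r m (v i)" "\<forall>i\<in>S. y i = dotp r m' (v i)"
        using \<open>x \<in> CDiv n r v Sig\<close> \<open>y \<in> CDiv n r v Sig\<close> S unfolding CDiv_def by blast
      then show ?thesis by (intro exI[of _ "m + m'"]) (simp add: dotp_add_left)
    qed
    then show ?thesis using that unfolding CDiv_def Elat_def by auto
  qed
  moreover have "- x \<in> CDiv n r v Sig" if "x \<in> CDiv n r v Sig" for x
  proof -
    have "\<exists>m. \<forall>i\<in>S. (- x) i = dotp r m (v i)" if S: "S \<in> Sig" for S
    proof -
      obtain m where "\<forall>i\<in>S. x i = dotp r m (v i)"
        using \<open>x \<in> CDiv n r v Sig\<close> S unfolding CDiv_def by blast
      then show ?thesis by (intro exI[of _ "- m"]) (simp add: dotp_uminus_left)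
    qed
    then show ?thesis using that unfolding CDiv_def Elat_def by auto
  qed
  ultimately show ?thesis unfolding subgrp_def by blast
qed

lemma P_sub_C:
  assumes "Sig \<subseteq> Pow {..<n}"
  shows "PstarM n r v \<subseteq> CDiv n r v Sig"
proof
  fix p assume "p \<in> PstarM n r v"
  then obtain m where p: "p = (\<lambda>i. if i < n then dotp r m (v i) else 0)" unfolding PstarM_def by blast
  have "\<forall>i\<in>S. p i = dotp r m (v i)" if "S \<in> Sig" for S using assms that p by auto
  moreover have "p \<in> Elat n" unfolding Elat_def p by simp
  ultimately show "p \<in> CDiv n r v Sig" unfolding CDiv_def by blast
qed

lemma restr_add: "restr S (a + b) = restr S a + restr S b"
  unfolding restr_def by (auto simp: fun_eq_iff)

lemma restr_diff: "restr S (a - b) = restr S a - restr S b"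
  unfolding restr_def by (auto simp: fun_eq_iff)

lemma restr_zero: "restr S 0 = 0"
  unfolding restr_def by (auto simp: fun_eq_iff)

lemma restr_uminus: "restr S (- a) = - restr S a"
  unfolding restr_def by (auto simp: fun_eq_iff)

lemma restr_Fsig: "restr S a \<in> Fsig_dual S"
  unfolding restr_def Fsig_dual_def by auto

lemma subgrp_absorb:
  assumes "subgrp Q" "A \<subseteq> Q" "0 \<in> A"
  shows "A + Q = Q"
proof
  show "A + Q \<subseteq> Q" using assms unfolding subgrp_def set_plus_def by auto
  show "Q \<subseteq> A + Q" using assms(3) unfolding set_plus_def by force
qed

lemma pi_sig_coset:
  assumes "S \<subseteq> {..<n}"
  shows "pi_sig r v S ({a} + PstarM n r v) = {restr S a} + Psig_star_img r v S"
proof -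
  have "restr S ` ({a} + PstarM n r v) = {restr S a} + restr S ` PstarM n r v"
    unfolding sing_plus image_image restr_add by auto
  moreover have "restr S ` PstarM n r v + Psig_star_img r v S = Psig_star_img r v S"
  proof (rule subgrp_absorb[OF Q_subgrp])
    show "restr S ` PstarM n r v \<subseteq> Psig_star_img r v S"
    proof
      fix x assume "x \<in> restr S ` PstarM n r v"
      then obtain m where "x = restr S (\<lambda>i. if i < n then dotp r m (v i) else 0)" unfolding PstarM_def by blast
      then have "x = (\<lambda>i. if i \<in> S then dotp r m (v i) else 0)" using assms unfolding restr_def by (auto simp: fun_eq_iff subset_iff)
      then show "x \<in> Psig_star_img r v S" using dotp_in_Q by simp
    qed
    show "0 \<in> restr S ` PstarM n r v"
      using P_subgrp[of n r v] restr_zero[of S] unfolding subgrp_def by (metis image_eqI)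
  qed
  ultimately show ?thesis unfolding pi_sig_def by (simp add: add.assoc)
qed

lemma vin_nsig: "finite S \<Longrightarrow> i \<in> S \<Longrightarrow> \<forall>k\<ge>r. v i k = 0 \<Longrightarrow> v i \<in> Nsig r v S"
proof -
  assume fS: "finite S" and i: "i \<in> S" and vz: "\<forall>k\<ge>r. v i k = 0"
  have "(\<Sum>l\<in>S. (if l = i then 1 else 0) * (of_int (v l k)::rat)) = of_int (v i k)" for k
  proof -
    have "(\<Sum>l\<in>S. (if l = i then 1 else 0) * (of_int (v l k)::rat)) = (\<Sum>l\<in>S. if l = i then of_int (v l k) else 0)"
      by (rule sum.cong) auto
    then show ?thesis using fS i by simp
  qed
  then have "\<exists>c::nat\<Rightarrow>rat. \<forall>k<r. of_int (v i k) = (\<Sum>l\<in>S. c l * (of_int (v l k)::rat))"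
    by (intro exI[of _ "\<lambda>l. if l = i then 1 else 0"]) simp
  then show ?thesis using vz unfolding Nsig_def by blast
qed

lemma Ksig_elem: "X \<in> Ksig r v S \<Longrightarrow> \<exists>a\<in>Fsig_dual S. X = {a} + Psig_star_img r v S"
  unfolding Ksig_def cosets_def by blast

lemma Fsig_add: "a \<in> Fsig_dual S \<Longrightarrow> b \<in> Fsig_dual S \<Longrightarrow> a + b \<in> Fsig_dual S"
  unfolding Fsig_dual_def by auto

lemma Fsig_uminus: "a \<in> Fsig_dual S \<Longrightarrow> - a \<in> Fsig_dual S"
  unfolding Fsig_dual_def by auto

lemma DirSum_grp:
  shows "grp (DirSumK r v Sig) (\<lambda>S. if S \<in> max_cones Sig then {0} + Psig_star_img r v S else 0)"
proof -
  define e where "e = (\<lambda>S. if S \<in> max_cones Sig then {0} + Psig_star_img r v S else 0)"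
  let ?D = "DirSumK r v Sig" and ?Q = "Psig_star_img r v"
  have QS: "subgrp (?Q S)" for S by (rule Q_subgrp)
  have k0: "{0} + ?Q S \<in> Ksig r v S" for S unfolding Ksig_def cosets_def
    by (rule imageI) (simp add: Fsig_dual_def)
  have eD: "e \<in> ?D" unfolding DirSumK_def mem_Collect_eq
  proof (intro conjI ballI allI impI)
    fix S assume "S \<in> max_cones Sig"
    then have "e S = {0} + ?Q S" unfolding e_def by (rule if_P)
    then show "e S \<in> Ksig r v S" using k0 by (simp only:)
  next
    fix S assume "S \<notin> max_cones Sig"
    then show "e S = 0" unfolding e_def by (rule if_not_P)
  qed
  have cl: "x + y \<in> ?D" if "x \<in> ?D" "y \<in> ?D" for x y
  proof -
    have "(x + y) S \<in> Ksig r v S" if S: "S \<in> max_cones Sig" for S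
    proof -
      have xS: "x S \<in> Ksig r v S" using \<open>x \<in> ?D\<close> S unfolding DirSumK_def by blast
      have yS: "y S \<in> Ksig r v S" using \<open>y \<in> ?D\<close> S unfolding DirSumK_def by blast
      obtain a where a: "a \<in> Fsig_dual S" "x S = {a} + ?Q S" using Ksig_elem[OF xS] by blast
      obtain b where b: "b \<in> Fsig_dual S" "y S = {b} + ?Q S" using Ksig_elem[OF yS] by blast
      have "(x + y) S = {a + b} + ?Q S" using a b coset_add[OF QS] by simp
      moreover have "a + b \<in> Fsig_dual S" using Fsig_add a b by blast
      ultimately show ?thesis unfolding Ksig_def cosets_def by blast
    qed
    moreover have "(x + y) S = 0" if "S \<notin> max_cones Sig" for S
      using \<open>x \<in> ?D\<close> \<open>y \<in> ?D\<close> that unfolding DirSumK_def by simp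
    ultimately show ?thesis unfolding DirSumK_def by blast
  qed
  have neut: "e + x = x" if "x \<in> ?D" for x
  proof
    fix S show "(e + x) S = x S"
    proof (cases "S \<in> max_cones Sig")
      case True
      have xS: "x S \<in> Ksig r v S" using \<open>x \<in> ?D\<close> True unfolding DirSumK_def by blast
      obtain a where "x S = {a} + ?Q S" using Ksig_elem[OF xS] by blast
      then show ?thesis unfolding e_def using True coset_add[OF QS, where a=0 and b=a] by simp
    next
      case False
      then show ?thesis using that unfolding e_def DirSumK_def by simp
    qed
  qed
  have inv: "\<exists>y\<in>?D. x + y = e" if xD: "x \<in> ?D" for x
  proof -
    have "\<forall>S\<in>max_cones Sig. \<exists>a. a \<in> Fsig_dual S \<and> x S = {a} + ?Q S"
      using Ksig_elem xD unfolding DirSumK_def by blast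
    then have "\<exists>f. \<forall>S\<in>max_cones Sig. f S \<in> Fsig_dual S \<and> x S = {f S} + ?Q S"
      by (rule bchoice)
    then obtain f where f: "\<forall>S\<in>max_cones Sig. f S \<in> Fsig_dual S \<and> x S = {f S} + ?Q S"
      by (elim exE)
    define y where "y = (\<lambda>S. if S \<in> max_cones Sig then {- f S} + ?Q S else 0)"
    have "y \<in> ?D"
      unfolding DirSumK_def mem_Collect_eq
    proof (intro conjI ballI allI impI)
      fix S assume S: "S \<in> max_cones Sig"
      then have "y S = {- f S} + ?Q S" unfolding y_def by (rule if_P)
      moreover have "- f S \<in> Fsig_dual S" using f S Fsig_uminus by blast
      ultimately show "y S \<in> Ksig r v S" unfolding Ksig_def cosets_def by blast
    next
      fix S assume "S \<notin> max_cones Sig"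
      then show "y S = 0" unfolding y_def by (rule if_not_P)
    qed
    moreover have "x + y = e"
    proof
      fix S show "(x + y) S = e S"
      proof (cases "S \<in> max_cones Sig")
        case True
        have "(x + y) S = ({f S} + ?Q S) + ({- f S} + ?Q S)"
          using f True unfolding y_def by simp
        also have "\<dots> = {f S + - f S} + ?Q S" by (rule coset_add[OF QS])
        also have "\<dots> = e S" unfolding e_def using True by simp
        finally show ?thesis .
      next
        case False
        then show ?thesis using xD unfolding e_def y_def DirSumK_def by simp
      qed
    qed
    ultimately show ?thesis by blast
  qed
  show ?thesis unfolding grp_def e_def[symmetric] using eD cl neut inv by blast
qed

theorem proposition2p7:
  fixes n r :: nat and v :: "nat \<Rightarrow> vec" and Sig :: "nat set set"
  assumes "simplicial_fan n r v Sig"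
    and "nondegenerate n r v"
  shows "real (card (cosets (ClZ n r v) (PicZ n r v Sig))) =
           (\<Prod>S\<in>max_cones Sig. real (card (Ksig r v S))) / real (card (Khat n r v Sig))"
proof -
  note FF = assms(1)[unfolded simplicial_fan_def]
  have vz: "\<forall>i<n. \<forall>k\<ge>r. v i k = 0" using FF by (rule conjunct1)
  have SigP: "Sig \<subseteq> Pow {..<n}" using FF[THEN conjunct2, THEN conjunct2] by (rule conjunct1)
  have li: "\<forall>S\<in>Sig. lin_indep_Q r v S"
    using FF[THEN conjunct2, THEN conjunct2, THEN conjunct2, THEN conjunct2, THEN conjunct2] by (rule conjunct1)
  have finSig: "finite Sig" using SigP finite_subset by (metis finite_Pow_iff finite_lessThan)
  have finS: "\<forall>T\<in>Sig. finite T" using SigP by (auto intro: finite_subset)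
  have maxSig: "max_cones Sig \<subseteq> Sig" unfolding max_cones_def by auto
  define E where "E = Elat n"
  define P where "P = PstarM n r v"
  define C where "C = CDiv n r v Sig"
  define Q where "Q = (\<lambda>S. Psig_star_img r v S)"
  define g where "g a = (\<lambda>S. if S \<in> max_cones Sig then {restr S a} + Q S else 0)" for a
  define F where "F a = {{a} + P} + PicZ n r v Sig" for a
  have QS: "subgrp (Q S)" for S unfolding Q_def by (rule Q_subgrp)
  have gker: "g a = g b \<longleftrightarrow> a - b \<in> C" if ab: "a \<in> E" "b \<in> E" for a b
  proof
    assume gab: "g a = g b"
    have h: "restr S (a - b) \<in> Q S" if S: "S \<in> max_cones Sig" for S
    proof -
      have "g a S = g b S" using gab by simp
      then have "{restr S a} + Q S = {restr S b} + Q S" using S unfolding g_def by simp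
      then have "restr S a - restr S b \<in> Q S" using coset_eq_iff[OF QS] by blast
      then show ?thesis by (simp add: restr_diff)
    qed
    have "\<exists>m. \<forall>i\<in>S. (a - b) i = dotp r m (v i)" if S: "S \<in> Sig" for S
    proof -
      obtain T where T: "T \<in> max_cones Sig" "S \<subseteq> T" using max_exists[OF finSig S finS] by blast
      have TSig: "T \<in> Sig" using T maxSig by blast
      obtain phi where phi: "phi \<in> Nsig_dual r v T" "restr T (a - b) = (\<lambda>i. if i \<in> T then phi (v i) else 0)"
        using h[OF T(1)] unfolding Q_def Psig_star_img_def by blast
      have "\<forall>x\<in>Nsig r v T. \<forall>y\<in>Nsig r v T. phi (x+y) = phi x + phi y" using phi(1) unfolding Nsig_dual_def by blast
      from ext_hom[OF _ this] obtain M :: vec where M: "\<forall>u\<in>Nsig r v T. (\<Sum>k<r. M k * of_int (u k)) = phi u"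
        using finS TSig by blast
      have "(a - b) i = dotp r M (v i)" if i: "i \<in> S" for i
      proof -
        have iT: "i \<in> T" using i T by blast
        have "i < n" using iT TSig SigP by blast
        then have "v i \<in> Nsig r v T" using vin_nsig[OF _ iT] finS TSig vz by blast
        then have "dotp r M (v i) = phi (v i)" using M unfolding dotp_def by simp
        moreover have "(a - b) i = phi (v i)" using fun_cong[OF phi(2), of i] iT unfolding restr_def by simp
        ultimately show ?thesis by simp
      qed
      then show ?thesis by blast
    qed
    moreover have "a - b \<in> E" using subgrp_diff[OF E_subgrp] ab unfolding E_def by blast
    ultimately show "a - b \<in> C" unfolding C_def CDiv_def E_def by blast
  next
    assume c: "a - b \<in> C"
    have "g a S = g b S" for S
    proof (cases "S \<in> max_cones Sig")
      case True
      obtain m where m: "\<forall>i\<in>S. (a - b) i = dotp r m (v i)" using c True maxSig unfolding C_def CDiv_def by blast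
      have "restr S (a - b) = (\<lambda>i. if i \<in> S then dotp r m (v i) else 0)" using m unfolding restr_def by auto
      then have "restr S a - restr S b \<in> Q S" using dotp_in_Q[of S r m v] unfolding Q_def by (simp add: restr_diff)
      then have "{restr S a} + Q S = {restr S b} + Q S" using coset_eq_iff[OF QS] by blast
      then show ?thesis unfolding g_def using True by simp
    next
      case False
      then show ?thesis unfolding g_def by simp
    qed
    then show "g a = g b" by (rule ext)
  qed
  have CS: "subgrp C" unfolding C_def by (rule C_subgrp)
  have PS: "subgrp P" unfolding P_def by (rule P_subgrp)
  have PC: "P \<subseteq> C" using P_sub_C[OF SigP] unfolding P_def C_def .
  have Fform: "F a = (\<lambda>c. {a + c} + P) ` C" for a
  proof -
    have "F a = (\<lambda>c. ({a} + P) + ({c} + P)) ` C"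
      unfolding F_def PicZ_def cosets_def sing_plus image_image P_def C_def by simp
    also have "\<dots> = (\<lambda>c. {a + c} + P) ` C" using coset_add[OF PS] by simp
    finally show ?thesis .
  qed
  have Fker: "F a = F b \<longleftrightarrow> a - b \<in> C" for a b
  proof
    assume Fab: "F a = F b"
    have "0 \<in> C" using CS unfolding subgrp_def by blast
    then have "{a + 0} + P \<in> F a" unfolding Fform by blast
    then obtain c where c: "c \<in> C" "{a} + P = {b + c} + P" using Fab unfolding Fform by auto
    then have "a - (b + c) \<in> P" using coset_eq_iff[OF PS] by blast
    then have "a - (b + c) \<in> C" using PC by blast
    then have "(a - (b + c)) + c \<in> C" using c(1) CS unfolding subgrp_def by blast
    then show "a - b \<in> C" by (simp add: algebra_simps)
  next
    assume ab: "a - b \<in> C"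
    show "F a = F b" unfolding Fform
    proof (intro equalityI subsetI)
      fix X assume "X \<in> (\<lambda>c. {a + c} + P) ` C"
      then obtain c where c: "c \<in> C" "X = {a + c} + P" by blast
      have "X = {b + ((a - b) + c)} + P" using c by (simp add: algebra_simps)
      moreover have "(a - b) + c \<in> C" using ab c CS unfolding subgrp_def by blast
      ultimately show "X \<in> (\<lambda>c. {b + c} + P) ` C" by blast
    next
      fix X assume "X \<in> (\<lambda>c. {b + c} + P) ` C"
      then obtain c where c: "c \<in> C" "X = {b + c} + P" by blast
      have "X = {a + (c - (a - b))} + P" using c by (simp add: algebra_simps)
      moreover have "c - (a - b) \<in> C" using ab c CS subgrp_diff by blast
      ultimately show "X \<in> (\<lambda>c. {a + c} + P) ` C" by blast
    qed
  qed
  have cl: "cosets (ClZ n r v) (PicZ n r v Sig) = F ` E"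
    unfolding cosets_def ClZ_def F_def image_image E_def P_def by simp
  have pig: "piK r v Sig ({a} + P) = g a" for a
  proof
    fix S show "piK r v Sig ({a} + P) S = g a S"
    proof (cases "S \<in> max_cones Sig")
      case True
      then have "S \<subseteq> {..<n}" using SigP maxSig by blast
      then show ?thesis using True pi_sig_coset[of S n r v a] unfolding piK_def g_def P_def Q_def by simp
    next
      case False
      then show ?thesis unfolding piK_def g_def by simp
    qed
  qed
  have piimg: "piK r v Sig ` ClZ n r v = g ` E"
    unfolding ClZ_def cosets_def image_image E_def[symmetric] P_def[symmetric] pig by simp
  have c1: "card (cosets (ClZ n r v) (PicZ n r v Sig)) = card (g ` E)"
    unfolding cl by (rule card_image_same_kernel) (simp add: Fker gker)
  define D where "D = DirSumK r v Sig"
  have KS: "finite (Ksig r v S)" if S: "S \<in> max_cones Sig" for S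
  proof -
    have SS: "S \<in> Sig" using S maxSig by blast
    then have "S \<subseteq> {..<n}" using SigP by blast
    then have "\<forall>i\<in>S. \<forall>k\<ge>r. v i k = 0" using vz by blast
    then show ?thesis using Ksig_finite[of S r v] finS li SS by blast
  qed
  define ext where "ext \<psi> = (\<lambda>S. if S \<in> max_cones Sig then \<psi> S else 0)" for \<psi> :: "nat set \<Rightarrow> vec set"
  have Dimg: "D = ext ` (PiE (max_cones Sig) (Ksig r v))"
  proof (intro equalityI subsetI)
    fix Phi assume "Phi \<in> D"
    then have "Phi = ext (restrict Phi (max_cones Sig))"
      "restrict Phi (max_cones Sig) \<in> PiE (max_cones Sig) (Ksig r v)"
      unfolding D_def DirSumK_def ext_def by (auto simp: fun_eq_iff)
    then show "Phi \<in> ext ` PiE (max_cones Sig) (Ksig r v)" by blast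
  next
    fix Phi assume "Phi \<in> ext ` PiE (max_cones Sig) (Ksig r v)"
    then show "Phi \<in> D" unfolding D_def DirSumK_def ext_def by auto
  qed
  have injext: "inj_on ext (PiE (max_cones Sig) (Ksig r v))"
  proof
    fix x y assume xy: "x \<in> PiE (max_cones Sig) (Ksig r v)" "y \<in> PiE (max_cones Sig) (Ksig r v)" "ext x = ext y"
    show "x = y"
    proof (rule PiE_ext[OF xy(1,2)])
      fix S assume "S \<in> max_cones Sig"
      then show "x S = y S" using fun_cong[OF xy(3), of S] unfolding ext_def by simp
    qed
  qed
  have finmax: "finite (max_cones Sig)" using finSig maxSig finite_subset by blast
  have cardD: "card D = (\<Prod>S\<in>max_cones Sig. card (Ksig r v S))"
    unfolding Dimg using card_image[OF injext] card_PiE[OF finmax] by simp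
  have "finite (PiE (max_cones Sig) (Ksig r v))" by (rule finite_PiE[OF finmax KS])
  then have finD: "finite D" unfolding Dimg by (rule finite_imageI)
  have gadd: "g a + g b = g (a + b)" for a b
  proof
    fix S show "(g a + g b) S = g (a + b) S"
      unfolding g_def using coset_add[OF QS] by (simp add: restr_add)
  qed
  have g0: "g 0 = (\<lambda>S. if S \<in> max_cones Sig then {0} + Psig_star_img r v S else 0)"
    unfolding g_def Q_def restr_zero by (rule refl)
  have gD: "grp D (g 0)" unfolding D_def g0 by (rule DirSum_grp)
  have ginD: "g a \<in> D" for a
    unfolding D_def DirSumK_def g_def Ksig_def cosets_def Q_def using restr_Fsig by auto
  have ES: "subgrp E" unfolding E_def by (rule E_subgrp)
  have gE: "grp (g ` E) (g 0)"
  proof -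
    have "0 \<in> E" using ES unfolding subgrp_def by blast
    moreover have "\<forall>x\<in>g ` E. \<forall>y\<in>g ` E. x + y \<in> g ` E"
      using ES gadd unfolding subgrp_def by auto
    moreover have "\<forall>x\<in>g ` E. g 0 + x = x" using gadd by auto
    moreover have "\<forall>x\<in>g ` E. \<exists>y\<in>g ` E. x + y = g 0"
    proof
      fix x assume "x \<in> g ` E"
      then obtain a where a: "a \<in> E" "x = g a" by blast
      then have "- a \<in> E" "x + g (- a) = g 0" using ES gadd unfolding subgrp_def by auto
      then show "\<exists>y\<in>g ` E. x + y = g 0" by blast
    qed
    ultimately show ?thesis unfolding grp_def by blast
  qed
  have gED: "g ` E \<subseteq> D" using ginD by blast
  have lag: "card D = card (cosets D (g ` E)) * card (g ` E)"
    by (rule lagrange[OF finD gD gED gE])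
  have kh: "Khat n r v Sig = cosets D (g ` E)" unfolding Khat_def D_def piimg ..
  have "D \<noteq> {}" using ginD by blast
  then have "cosets D (g ` E) \<noteq> {}" unfolding cosets_def by blast
  moreover have "finite (cosets D (g ` E))" using finD unfolding cosets_def by blast
  ultimately have khpos: "card (Khat n r v Sig) > 0" unfolding kh by (simp add: card_gt_0_iff)
  have "real (card D) = real (card (Khat n r v Sig)) * real (card (g ` E))"
    using lag kh by simp
  then have "real (card (g ` E)) = real (card D) / real (card (Khat n r v Sig))"
    using khpos by (simp add: field_simps)
  then show ?thesis unfolding c1 cardD by simp
qed

end
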